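(* Let $\lambda,\mu,\theta>0$ with $\lambda\theta>2\mu$, $\alpha,\hat\alpha\in\mathbb{R}$, and consider for a small parameter $\epsilon$ and delay $\Delta>0$ the system $$\dot q_1(t) = \lambda\,\frac{\exp\big(-\theta q_1(t-\Delta)+(\alpha+\epsilon\hat\alpha)\big)}{\exp\big(-\theta q_1(t-\Delta)+(\alpha+\epsilon\hat\alpha)\big)+\exp\big(-\theta q_2(t-\Delta)+\alpha\big)} - \mu\,q_1(t),$$ $$\dot q_2(t) = \lambda\,\frac{\exp\big(-\theta q_2(t-\Delta)+\alpha\big)}{\exp\big(-\theta q_1(t-\Delta)+(\alpha+\epsilon\hat\alpha)\big)+\exp\big(-\theta q_2(t-\Delta)+\alpha\big)} - \mu\,q_2(t).$$ Let $\omega_{\mathrm{cr}}=\tfrac12\sqrt{\lambda^2\theta^2-4\mu^2}$ and $\Delta_{\mathrm{cr}}=\arccos\!\big(-\tfrac{2\mu}{\lambda\theta}\big)/\omega_{\mathrm{cr}}$. Then the critical delay $\Delta_{\mathrm{mod}}$ at which the stability of the system about its equilibrium changes satisfies $$\Delta_{\mathrm{mod}}=\Delta_{\mathrm{cr}}+\frac{4\mu^3+\mu^2\lambda^2\theta^2\Delta_{\mathrm{cr}}}{4\omega_{\mathrm{cr}}^2(\lambda\theta+2\mu)^2}\,\epsilon^2\hat\alpha^2+O(\epsilon^3).$$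
   Context: This is the asymmetric two-queue delayed-information fluid model in which only the preference parameter of the first queue is perturbed ($\alpha\mapsto\alpha+\epsilon\hat\alpha$); $\lambda$ is the arrival rate, $\mu$ the service rate, $\theta$ the sensitivity to queue length. $\Delta_{\mathrm{cr}}$ is the critical delay of the unperturbed symmetric system. "Stability changes" refers to the linearization about the equilibrium passing from asymptotically stable to unstable as $\Delta$ crosses $\Delta_{\mathrm{mod}}$. *)

theory Defs
  imports "HOL-Analysis.Analysis" "HOL-Library.Landau_Symbols"
begin

text \<open>Right-hand sides (delayed routing terms) of the perturbed two-queue model;
  x, y are the delayed queue lengths q1(t - Delta), q2(t - Delta).\<close>

definition F1 :: "real \<Rightarrow> real \<Rightarrow> real \<Rightarrow> real \<Rightarrow> real \<Rightarrow> real \<Rightarrow> real \<Rightarrow> real" where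
  "F1 lam th al alh eps x y =
     lam * exp (- th * x + (al + eps * alh)) /
       (exp (- th * x + (al + eps * alh)) + exp (- th * y + al))"

definition F2 :: "real \<Rightarrow> real \<Rightarrow> real \<Rightarrow> real \<Rightarrow> real \<Rightarrow> real \<Rightarrow> real \<Rightarrow> real" where
  "F2 lam th al alh eps x y =
     lam * exp (- th * y + al) /
       (exp (- th * x + (al + eps * alh)) + exp (- th * y + al))"

definition is_equilibrium :: "real \<Rightarrow> real \<Rightarrow> real \<Rightarrow> real \<Rightarrow> real \<Rightarrow> real \<Rightarrow> real \<Rightarrow> real \<Rightarrow> bool" where
  "is_equilibrium lam mu th al alh eps x y \<longleftrightarrow>
     mu * x = F1 lam th al alh eps x y \<and> mu * y = F2 lam th al alh eps x y"

text \<open>Characteristic function det(s I + mu I - exp(-s Delta) B) of the linearization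
  u'(t) = - mu u(t) + B u(t - Delta) about the equilibrium (x, y), where B is the
  Jacobian of (F1, F2) at (x, y).\<close>

definition char_fun ::
  "real \<Rightarrow> real \<Rightarrow> real \<Rightarrow> real \<Rightarrow> real \<Rightarrow> real \<Rightarrow> real \<Rightarrow> real \<Rightarrow> real \<Rightarrow> complex \<Rightarrow> complex" where
  "char_fun lam mu th al alh eps x y D s =
     (let b11 = deriv (\<lambda>z. F1 lam th al alh eps z y) x;
          b12 = deriv (\<lambda>z. F1 lam th al alh eps x z) y;
          b21 = deriv (\<lambda>z. F2 lam th al alh eps z y) x;
          b22 = deriv (\<lambda>z. F2 lam th al alh eps x z) y;
          E = exp (- s * complex_of_real D)
      in (s + complex_of_real mu - E * complex_of_real b11) *
         (s + complex_of_real mu - E * complex_of_real b22)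
         - (E * complex_of_real b12) * (E * complex_of_real b21))"

definition lin_stable :: "real \<Rightarrow> real \<Rightarrow> real \<Rightarrow> real \<Rightarrow> real \<Rightarrow> real \<Rightarrow> real \<Rightarrow> bool" where
  "lin_stable lam mu th al alh eps D \<longleftrightarrow>
     (\<forall>x y. is_equilibrium lam mu th al alh eps x y \<longrightarrow>
        (\<forall>s. char_fun lam mu th al alh eps x y D s = 0 \<longrightarrow> Re s < 0))"

definition lin_unstable :: "real \<Rightarrow> real \<Rightarrow> real \<Rightarrow> real \<Rightarrow> real \<Rightarrow> real \<Rightarrow> real \<Rightarrow> bool" where
  "lin_unstable lam mu th al alh eps D \<longleftrightarrow>
     (\<exists>x y. is_equilibrium lam mu th al alh eps x y \<and>
        (\<exists>s. char_fun lam mu th al alh eps x y D s = 0 \<and> Re s > 0))"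

end

theory Submission
  imports Defs
begin


lemma tanh_le_self: "0 \<le> (u::real) \<Longrightarrow> tanh u \<le> u"
proof -
  assume u: "0 \<le> u"
  have "(\<lambda>x. x - tanh x) 0 \<le> (\<lambda>x. x - tanh x) u"
  proof (rule DERIV_nonneg_imp_nondecreasing[OF u])
    fix x :: real
    show "\<exists>y. DERIV (\<lambda>x. x - tanh x) x :> y \<and> 0 \<le> y"
      by (rule exI[of _ "1 - (1 - tanh x ^ 2)"]) (auto intro!: derivative_eq_intros simp: cosh_real_pos[THEN less_imp_neq, symmetric] )
  qed
  then show ?thesis by simp
qed

lemma tanh_cubic: "0 \<le> (u::real) \<Longrightarrow> u - tanh u \<le> u ^ 3"
proof -
  assume u: "0 \<le> u"
  have "(\<lambda>x. x ^ 3 / 3 - (x - tanh x)) 0 \<le> (\<lambda>x. x ^ 3 / 3 - (x - tanh x)) u"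
  proof (rule DERIV_nonneg_imp_nondecreasing[OF u])
    fix x :: real
    assume x: "0 \<le> x" "x \<le> u"
    have "tanh x \<le> x" "0 \<le> tanh x" using tanh_le_self[OF x(1)] x by auto
    then have "tanh x ^ 2 \<le> x ^ 2" by (simp add: power_mono)
    then show "\<exists>y. DERIV (\<lambda>x. x ^ 3 / 3 - (x - tanh x)) x :> y \<and> 0 \<le> y"
      by (intro exI[of _ "x^2 - tanh x ^ 2"]) (auto intro!: derivative_eq_intros simp: cosh_real_pos[THEN less_imp_neq, symmetric] power2_eq_square power3_eq_cube)
  qed
  then have "u - tanh u \<le> u^3/3" by simp
  also have "\<dots> \<le> u^3" using u by simp
  finally show ?thesis .
qed

lemma abs_tanh_le: "\<bar>tanh (u::real)\<bar> \<le> \<bar>u\<bar>"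
  by (metis abs_ge_zero tanh_le_self tanh_real_abs)

lemma abs_tanh_cubic: "\<bar>u - tanh (u::real)\<bar> \<le> \<bar>u\<bar> ^ 3"
proof (cases "u \<ge> 0")
  case True then show ?thesis using tanh_cubic[of u] tanh_le_self[of u] by auto
next
  case False
  then have "-u \<ge> 0" by simp
  from tanh_cubic[OF this] tanh_le_self[OF this] False show ?thesis by auto
qed



lemma root_eqs:
  fixes s :: complex and mu K D :: real
  assumes "s + complex_of_real mu + complex_of_real K * exp (- s * complex_of_real D) = 0"
  shows "Re s + mu + K * exp (- Re s * D) * cos (Im s * D) = 0"
    and "Im s - K * exp (- Re s * D) * sin (Im s * D) = 0"
proof -
  have "Re (s + complex_of_real mu + complex_of_real K * exp (- s * complex_of_real D)) = 0"
       "Im (s + complex_of_real mu + complex_of_real K * exp (- s * complex_of_real D)) = 0"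
    using assms by auto
  then show "Re s + mu + K * exp (- Re s * D) * cos (Im s * D) = 0"
    and "Im s - K * exp (- Re s * D) * sin (Im s * D) = 0"
    by (auto simp: Re_exp Im_exp)
qed

lemma stab:
  fixes s :: complex and mu K D :: real
  assumes mu: "0 < mu" and K: "mu < K" and D: "0 < D"
    and DD: "D < arccos (- mu / K) / sqrt (K\<^sup>2 - mu\<^sup>2)"
    and eq: "s + complex_of_real mu + complex_of_real K * exp (- s * complex_of_real D) = 0"
  shows "Re s < 0"
proof (rule ccontr)
  assume "\<not> Re s < 0"
  then have a: "Re s \<ge> 0" by simp
  define a b where "a = Re s" and "b = Im s"
  define m where "m = K * exp (- a * D)"
  have e1: "a + mu + m * cos (b * D) = 0" and e2: "b - m * sin (b * D) = 0"
    using root_eqs[OF eq] unfolding a_def b_def m_def by auto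
  have m0: "0 < m" using K mu unfolding m_def by simp
  have mK: "m \<le> K" unfolding m_def using K mu a D a_def
    by (simp add: mult_nonneg_nonneg)
  have h1: "a + mu = - (m * cos (b * D))" and h2: "b = m * sin (b * D)" using e1 e2 by linarith+
  have "(a + mu)^2 + b^2 = (- (m * cos (b * D)))^2 + (m * sin (b * D))^2"
    by (subst h1, subst (2) h2) (rule refl)
  also have "\<dots> = m^2 * ((cos (b*D))^2 + (sin (b*D))^2)" by (simp only: power_mult_distrib power2_minus distrib_left)
  also have "\<dots> = m^2" by (simp only: sin_cos_squared_add2 mult_1_right)
  finally have sq: "(a + mu)^2 + b^2 = m^2" .
  have W0: "0 < K\<^sup>2 - mu\<^sup>2" using K mu by (simp add: power_strict_mono)
  have "b^2 \<le> K^2 - mu^2"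
  proof -
    have "mu^2 \<le> (a+mu)^2" using a mu a_def by (simp add: power_mono)
    moreover have "m^2 \<le> K^2" using mK m0 by (simp add: power_mono)
    ultimately show ?thesis using sq by linarith
  qed
  then have bW: "\<bar>b\<bar> \<le> sqrt (K\<^sup>2 - mu\<^sup>2)" by (metis real_sqrt_abs real_sqrt_le_mono)
  have cosb: "cos (\<bar>b\<bar> * D) \<le> - mu / K"
  proof -
    have "cos (\<bar>b\<bar> * D) = cos (b * D)" by (cases "b \<ge> 0") auto
    also have "\<dots> = - (a + mu) / m" using e1 m0 by (simp add: field_simps)
    also have "\<dots> \<le> - mu / K"
    proof -
      have "mu / K \<le> mu / m" using m0 mK mu by (simp add: frac_le)
      also have "\<dots> \<le> (a + mu) / m" using a a_def m0 by (simp add: divide_right_mono)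
      finally have "mu / K \<le> (a + mu) / m" .
      moreover have "- (a + mu) / m = - ((a + mu) / m)" by (rule minus_divide_left[symmetric])
      ultimately show ?thesis by linarith
    qed
    finally show ?thesis .
  qed
  have q: "0 < mu / K" "mu / K < 1" using mu K by auto
  have mK1: "-1 \<le> - mu / K" "- mu / K \<le> 1" using q by auto
  have th: "arccos (- mu / K) \<le> \<bar>b\<bar> * D"
  proof (cases "\<bar>b\<bar> * D \<le> pi")
    case True
    have "arccos (- mu / K) \<le> arccos (cos (\<bar>b\<bar> * D))"
      by (rule arccos_le_arccos) (use cosb mK1 in auto)
    also have "\<dots> = \<bar>b\<bar> * D" using True D by (simp add: arccos_cos)
    finally show ?thesis .
  next
    case False
    then show ?thesis using arccos_bounded[OF mK1] by linarith
  qed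
  have "\<bar>b\<bar> * D \<le> sqrt (K\<^sup>2 - mu\<^sup>2) * D" using bW D by simp
  also have "\<dots> < sqrt (K\<^sup>2 - mu\<^sup>2) * (arccos (- mu / K) / sqrt (K\<^sup>2 - mu\<^sup>2))"
    using DD W0 by (intro mult_strict_left_mono) auto
  also have "\<dots> = arccos (- mu / K)" using W0 by simp
  finally show False using th by simp
qed



lemma unstab:
  fixes mu K D :: real
  assumes mu: "0 < mu" and K: "mu < K" and D: "0 < D"
    and DD: "arccos (- mu / K) / sqrt (K\<^sup>2 - mu\<^sup>2) < D"
  shows "\<exists>s. Re s > 0 \<and> s + complex_of_real mu + complex_of_real K * exp (- s * complex_of_real D) = 0"
proof -
  define h where "h a = (a + mu) * exp (a * D)" for a
  have hc: "continuous_on {0..K} h" unfolding h_def by (intro continuous_intros)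
  have "h 0 \<le> K" using K by (simp add: h_def)
  moreover have "K \<le> h K"
  proof -
    have "K \<le> K + mu" using mu by simp
    also have "\<dots> \<le> (K + mu) * exp (K * D)" using K mu D by simp
    finally show ?thesis by (simp add: h_def)
  qed
  ultimately obtain a1 where a1: "0 \<le> a1" "a1 \<le> K" "h a1 = K"
    using IVT'[of h 0 K K, OF _ _ _ hc] K mu by auto
  have a1p: "0 < a1" using a1 K by (cases "a1 = 0") (auto simp: h_def)
  have hb: "mu \<le> h a \<and> h a \<le> K" if "0 \<le> a" "a \<le> a1" for a
  proof
    have "mu * 1 \<le> (a + mu) * exp (a * D)"
      using that mu D by (intro mult_mono) auto
    then show "mu \<le> h a" by (simp add: h_def)
    have "(a + mu) * exp (a * D) \<le> (a1 + mu) * exp (a1 * D)"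
      using that mu D by (intro mult_mono) auto
    then show "h a \<le> K" using a1 by (simp add: h_def)
  qed
  define v where "v a = - h a / K" for a
  have vb: "-1 \<le> v a \<and> v a \<le> 1" if "0 \<le> a" "a \<le> a1" for a
    using hb[OF that] K mu by (auto simp: v_def field_simps)
  define G where "G a = D * K * exp (- a * D) * sqrt (1 - (v a)\<^sup>2) - arccos (v a)" for a
  have Gc: "continuous_on {0..a1} (\<lambda>a. - G a)"
    unfolding G_def v_def h_def
    using vb K mu unfolding v_def h_def
    by (intro continuous_intros) auto
  have W0: "0 < K\<^sup>2 - mu\<^sup>2" using K mu by (simp add: power_strict_mono)
  have G0: "G 0 > 0"
  proof -
    have "v 0 = - mu / K" by (simp add: v_def h_def)
    moreover have "K * sqrt (1 - (mu / K)\<^sup>2) = sqrt (K\<^sup>2 - mu\<^sup>2)"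
    proof -
      have "K * sqrt (1 - (mu / K)\<^sup>2) = sqrt (K\<^sup>2) * sqrt (1 - (mu / K)\<^sup>2)" using K mu by simp
      also have "\<dots> = sqrt (K\<^sup>2 * (1 - (mu / K)\<^sup>2))" by (simp add: real_sqrt_mult)
      also have "K\<^sup>2 * (1 - (mu / K)\<^sup>2) = K\<^sup>2 - mu\<^sup>2" using K mu by (simp add: field_simps power2_eq_square)
      finally show ?thesis .
    qed
    moreover have "arccos (- mu / K) < D * sqrt (K\<^sup>2 - mu\<^sup>2)"
      using DD W0 by (simp add: divide_less_eq mult.commute)
    ultimately show ?thesis unfolding G_def by (simp add: mult.assoc)
  qed
  have Ga1: "G a1 < 0"
  proof -
    have "v a1 = -1" using a1 K mu by (simp add: v_def)
    then show ?thesis by (simp add: G_def)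
  qed
  obtain a where a: "0 \<le> a" "a \<le> a1" "- G a = 0"
    using IVT'[of "\<lambda>a. - G a" 0 0 a1, OF _ _ _ Gc] G0 Ga1 a1p by auto
  have ap: "0 < a" using a G0 by (cases "a = 0") auto
  define b where "b = arccos (v a) / D"
  have bD: "b * D = arccos (v a)" using D by (simp add: b_def)
  have cb: "cos (b * D) = v a" using bD vb[OF a(1,2)] by simp
  have sb: "sin (b * D) = sqrt (1 - (v a)\<^sup>2)" using bD vb[OF a(1,2)] by (simp add: sin_arccos)
  have re: "a + mu + K * exp (- a * D) * cos (b * D) = 0"
  proof -
    have "K * exp (- a * D) * cos (b * D) = - (exp (- a * D) * h a)"
      using cb K mu by (simp add: v_def)
    also have "\<dots> = - (a + mu) * (exp (- a * D) * exp (a * D))" by (simp add: h_def algebra_simps)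
    also have "exp (- a * D) * exp (a * D) = 1" by (simp add: exp_minus field_simps)
    finally show ?thesis by simp
  qed
  have im: "b - K * exp (- a * D) * sin (b * D) = 0"
  proof -
    have "D * (b - K * exp (- a * D) * sin (b * D)) = - G a"
      using bD sb by (simp add: G_def algebra_simps)
    then show ?thesis using a D by simp
  qed
  show ?thesis
  proof (intro exI conjI)
    show "0 < Re (Complex a b)" using ap by simp
    show "Complex a b + complex_of_real mu + complex_of_real K * exp (- Complex a b * complex_of_real D) = 0"
      using re im by (simp add: complex_eq_iff Re_exp Im_exp)
  qed
qed



lemma aux1: "(a::real) > 0 \<Longrightarrow> b > 0 \<Longrightarrow> (1 - b/a)/(1+b/a) = (a-b)/(a+b)"
proof -
  assume "a > 0" "b > 0"
  then have "a \<noteq> 0" "a + b \<noteq> 0" by auto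
  then have "1 - b/a = (a-b)/a" "1+b/a = (a+b)/a" by (simp_all add: field_simps)
  then show ?thesis using \<open>a \<noteq> 0\<close> by simp
qed

lemma aux3: "(a::real) > 0 \<Longrightarrow> b > 0 \<Longrightarrow> lam * a / (a+b) = lam * (1 + (a-b)/(a+b)) / 2"
proof -
  assume "a > 0" "b > 0"
  then have "a + b \<noteq> 0" by auto
  then show ?thesis by (simp add: field_simps)
qed

lemma aux4: "(a::real) > 0 \<Longrightarrow> b > 0 \<Longrightarrow> lam * b / (a+b) = lam * (1 - (a-b)/(a+b)) / 2"
proof -
  assume "a > 0" "b > 0"
  then have "a + b \<noteq> 0" by auto
  then show ?thesis by (simp add: field_simps)
qed

lemma tanh_exp_ratio:
  fixes p q :: real
  shows "tanh ((p - q) / 2) = (exp p - exp q) / (exp p + exp q)"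
proof -
  have "exp (- 2 * ((p - q) / 2)) = exp q / exp p" by (simp add: exp_diff[symmetric])
  then have "tanh ((p - q) / 2) = (1 - exp q / exp p) / (1 + exp q / exp p)"
    by (simp add: tanh_real_altdef)
  also have "\<dots> = (exp p - exp q) / (exp p + exp q)"
    by (rule aux1) auto
  finally show ?thesis .
qed

lemma F1_tanh: "F1 lam th al alh eps x y = lam * (1 + tanh ((eps * alh - th * (x - y)) / 2)) / 2"
proof -
  define p where "p = - th * x + (al + eps * alh)"
  define q where "q = - th * y + al"
  have w: "(eps * alh - th * (x - y)) / 2 = (p - q) / 2" by (simp add: p_def q_def algebra_simps)
  show ?thesis unfolding F1_def p_def[symmetric] q_def[symmetric] w tanh_exp_ratio
    by (rule aux3) auto
qed

lemma F2_tanh: "F2 lam th al alh eps x y = lam * (1 - tanh ((eps * alh - th * (x - y)) / 2)) / 2"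
proof -
  define p where "p = - th * x + (al + eps * alh)"
  define q where "q = - th * y + al"
  have w: "(eps * alh - th * (x - y)) / 2 = (p - q) / 2" by (simp add: p_def q_def algebra_simps)
  show ?thesis unfolding F2_def p_def[symmetric] q_def[symmetric] w tanh_exp_ratio
    by (rule aux4) auto
qed

definition kk :: "real \<Rightarrow> real \<Rightarrow> real \<Rightarrow> real \<Rightarrow> real \<Rightarrow> real \<Rightarrow> real" where
  "kk lam th alh eps x y = lam * th * (1 - (tanh ((eps * alh - th * (x - y)) / 2))\<^sup>2) / 4"

lemma cosh_nz: "cosh (x::real) \<noteq> 0" using cosh_real_pos[of x] by simp

lemma dF1x: "deriv (\<lambda>z. F1 lam th al alh eps z y) x = - kk lam th alh eps x y"
  unfolding F1_tanh kk_def
  by (rule DERIV_imp_deriv) (auto intro!: derivative_eq_intros simp: cosh_nz)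

lemma dF1y: "deriv (\<lambda>z. F1 lam th al alh eps x z) y = kk lam th alh eps x y"
  unfolding F1_tanh kk_def
  by (rule DERIV_imp_deriv) (auto intro!: derivative_eq_intros simp: cosh_nz)

lemma dF2x: "deriv (\<lambda>z. F2 lam th al alh eps z y) x = kk lam th alh eps x y"
  unfolding F2_tanh kk_def
  by (rule DERIV_imp_deriv) (auto intro!: derivative_eq_intros simp: cosh_nz)

lemma dF2y: "deriv (\<lambda>z. F2 lam th al alh eps x z) y = - kk lam th alh eps x y"
  unfolding F2_tanh kk_def
  by (rule DERIV_imp_deriv) (auto intro!: derivative_eq_intros simp: cosh_nz)

lemma char_fun_factor:
  "char_fun lam mu th al alh eps x y D s =
     (s + complex_of_real mu) *
     (s + complex_of_real mu + complex_of_real (2 * kk lam th alh eps x y) * exp (- s * complex_of_real D))"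
  unfolding char_fun_def Let_def dF1x dF1y dF2x dF2y
  by (simp add: algebra_simps power2_eq_square)



lemma taylor2:
  fixes f f' f'' :: "real \<Rightarrow> real"
  assumes ab: "a \<le> b"
    and d1: "\<And>x. a \<le> x \<Longrightarrow> x \<le> b \<Longrightarrow> DERIV f x :> f' x"
    and d2: "\<And>x. a \<le> x \<Longrightarrow> x \<le> b \<Longrightarrow> DERIV f' x :> f'' x"
    and bd: "\<And>x. a \<le> x \<Longrightarrow> x \<le> b \<Longrightarrow> \<bar>f'' x\<bar> \<le> M"
    and x: "a \<le> x" "x \<le> b"
  shows "\<bar>f x - f b - f' b * (x - b)\<bar> \<le> M * (x - b)\<^sup>2"
proof (cases "x = b")
  case True then show ?thesis by simp
next
  case False
  then have xb: "x < b" using x by simp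
  have "\<exists>z. x < z \<and> z < b \<and> ((\<lambda>y. f y - f' b * y) b - (\<lambda>y. f y - f' b * y) x = (b - x) * (f' z - f' b))"
    by (rule MVT2[OF xb]) (use d1 x in \<open>auto intro!: derivative_eq_intros\<close>)
  then obtain z where z: "x < z" "z < b" "f b - f' b * b - (f x - f' b * x) = (b - x) * (f' z - f' b)"
    by auto
  have "\<exists>w. z < w \<and> w < b \<and> (f' b - f' z = (b - z) * f'' w)"
    by (rule MVT2[OF z(2)]) (use d2 x z in auto)
  then obtain w where w: "z < w" "w < b" "f' b - f' z = (b - z) * f'' w" by auto
  have "f x - f b - f' b * (x - b) = (b - x) * (f' b - f' z)"
    using z(3) by (simp add: algebra_simps)
  also have "\<dots> = (b - x) * (b - z) * f'' w" using w(3) by simp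
  finally have "f x - f b - f' b * (x - b) = (b - x) * (b - z) * f'' w" .
  then have "\<bar>f x - f b - f' b * (x - b)\<bar> = (b - x) * (b - z) * \<bar>f'' w\<bar>"
    using z xb by (simp add: abs_mult)
  also have "\<dots> \<le> (b - x) * (b - x) * M"
    using z xb w x bd[of w] by (intro mult_mono) auto
  also have "(b - x) * (b - x) * M = M * (x - b)\<^sup>2" by (simp add: power2_eq_square algebra_simps)
  finally show ?thesis .
qed

definition Wf :: "real \<Rightarrow> real \<Rightarrow> real" where "Wf mu K = sqrt (K\<^sup>2 - mu\<^sup>2)"
definition thf :: "real \<Rightarrow> real \<Rightarrow> real" where "thf mu K = arccos (- mu / K)"
definition fD :: "real \<Rightarrow> real \<Rightarrow> real" where "fD mu K = thf mu K / Wf mu K"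

definition W1 where "W1 mu K = K / Wf mu K"
definition W2 where "W2 mu K = (Wf mu K - K * W1 mu K) / (Wf mu K)\<^sup>2"
definition th1 where "th1 mu K = - mu / (K * Wf mu K)"
definition th2 where "th2 mu K = mu * (Wf mu K + K * W1 mu K) / (K * Wf mu K)\<^sup>2"
definition fd where "fd mu K = (th1 mu K * Wf mu K - thf mu K * W1 mu K) / (Wf mu K)\<^sup>2"
definition fdd where "fdd mu K = ((th2 mu K * Wf mu K - thf mu K * W2 mu K) * (Wf mu K)\<^sup>2
   - (th1 mu K * Wf mu K - thf mu K * W1 mu K) * (2 * Wf mu K * W1 mu K)) / ((Wf mu K)\<^sup>2)\<^sup>2"

context
  fixes mu K :: real
  assumes mu: "0 < mu" and K: "mu < K"
begin

lemma Wpos: "0 < Wf mu K"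
  unfolding Wf_def using mu K by (simp add: power_strict_mono)

lemma DW: "DERIV (Wf mu) K :> W1 mu K"
proof -
  have "0 < K\<^sup>2 - mu\<^sup>2" using mu K by (simp add: power_strict_mono)
  moreover have i: "DERIV (\<lambda>K. K\<^sup>2 - mu\<^sup>2) K :> 2 * K" by (auto intro!: derivative_eq_intros)
  ultimately have "DERIV (\<lambda>K. sqrt (K\<^sup>2 - mu\<^sup>2)) K :> inverse (sqrt (K\<^sup>2 - mu\<^sup>2)) / 2 * (2 * K)"
    using DERIV_chain2[OF DERIV_real_sqrt i] by simp
  moreover have "inverse (sqrt (K\<^sup>2 - mu\<^sup>2)) / 2 * (2 * K) = W1 mu K"
    unfolding W1_def Wf_def by (simp add: field_simps)
  ultimately show ?thesis unfolding Wf_def[abs_def] by simp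
qed

lemma Dth: "DERIV (thf mu) K :> th1 mu K"
proof -
  have q: "0 < mu / K" "mu / K < 1" using mu K by auto
  then have q2: "-1 < mu / K" by linarith
  have s: "sqrt (1 - (- mu / K)\<^sup>2) = Wf mu K / K"
  proof -
    have "1 - (- mu / K)\<^sup>2 = (K\<^sup>2 - mu\<^sup>2) / K\<^sup>2" using mu K by (simp add: field_simps power2_eq_square)
    then show ?thesis using mu K by (simp add: Wf_def real_sqrt_divide)
  qed
  have "DERIV (\<lambda>K. arccos (- mu / K)) K :> inverse (- sqrt (1 - (- mu / K)\<^sup>2)) * (mu / K\<^sup>2)"
    using q q2 mu K by (auto intro!: derivative_eq_intros simp: power2_eq_square)
  moreover have "inverse (- sqrt (1 - (- mu / K)\<^sup>2)) * (mu / K\<^sup>2) = th1 mu K"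
    unfolding s th1_def using mu K Wpos by (simp add: field_simps power2_eq_square)
  ultimately show ?thesis unfolding thf_def[abs_def] by simp
qed

lemma DW1: "DERIV (W1 mu) K :> W2 mu K"
proof -
  have "DERIV (\<lambda>K. K / Wf mu K) K :> (1 * Wf mu K - K * W1 mu K) / (Wf mu K * Wf mu K)"
    by (rule DERIV_divide[OF DERIV_ident DW]) (use Wpos in simp)
  then show ?thesis unfolding W1_def[abs_def] W2_def by (simp add: power2_eq_square)
qed

lemma Dth1: "DERIV (th1 mu) K :> th2 mu K"
proof -
  have "DERIV (\<lambda>K. - mu / (K * Wf mu K)) K :> (0 * (K * Wf mu K) - (- mu) * (1 * Wf mu K + W1 mu K * K)) / ((K * Wf mu K) * (K * Wf mu K))"
    by (rule DERIV_divide[OF DERIV_const DERIV_mult[OF DERIV_ident DW]]) (use Wpos mu K in simp)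
  then show ?thesis unfolding th1_def[abs_def] th2_def by (simp add: power2_eq_square algebra_simps)
qed

lemma DfD: "DERIV (fD mu) K :> fd mu K"
proof -
  have "DERIV (\<lambda>K. thf mu K / Wf mu K) K :> (th1 mu K * Wf mu K - thf mu K * W1 mu K) / (Wf mu K * Wf mu K)"
    by (rule DERIV_divide[OF Dth DW]) (use Wpos in simp)
  then show ?thesis unfolding fD_def[abs_def] fd_def by (simp add: power2_eq_square)
qed

lemma Dfd: "DERIV (fd mu) K :> fdd mu K"
proof -
  have "DERIV (\<lambda>K. (th1 mu K * Wf mu K - thf mu K * W1 mu K) / (Wf mu K)^2) K :>
     ((th2 mu K * Wf mu K + W1 mu K * th1 mu K - (th1 mu K * W1 mu K + W2 mu K * thf mu K)) * (Wf mu K)^2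
       - (th1 mu K * Wf mu K - thf mu K * W1 mu K) * (of_nat 2 * (W1 mu K * Wf mu K ^ (2 - Suc 0))))
      / ((Wf mu K)^2 * (Wf mu K)^2)"
    by (rule DERIV_divide[OF DERIV_diff[OF DERIV_mult[OF Dth1 DW] DERIV_mult[OF Dth DW1]] DERIV_power[OF DW]])
       (use Wpos in simp)
  then show ?thesis unfolding fd_def[abs_def] fdd_def
    by (simp add: power2_eq_square algebra_simps)
qed

end

lemma fdd_cont:
  assumes mu: "0 < mu" and K1: "mu < K1"
  shows "continuous_on {K1..K2} (fdd mu)"
proof -
  have W: "\<forall>K\<in>{K1..K2}. 0 < K\<^sup>2 - mu\<^sup>2" using mu K1 by (auto intro!: power_strict_mono)
  have B: "\<forall>K\<in>{K1..K2}. -1 \<le> - mu / K \<and> - mu / K \<le> 1" using mu K1 by (auto simp: field_simps)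
  have N: "\<forall>K\<in>{K1..K2}. K \<noteq> 0" using mu K1 by auto
  show ?thesis
    unfolding fdd_def[abs_def] th2_def th1_def W2_def W1_def thf_def Wf_def
    using W B N by (intro continuous_intros) auto
qed



lemma g_strict: "0 \<le> (A::real) \<Longrightarrow> u < v \<Longrightarrow> 2 * u + A * tanh u < 2 * v + A * tanh v"
proof -
  assume "0 \<le> A" "u < v"
  then have "A * tanh u \<le> A * tanh v" by (intro mult_left_mono) auto
  then show ?thesis using \<open>u < v\<close> by linarith
qed

lemma U_ex1: "0 \<le> (A::real) \<Longrightarrow> \<exists>!u. 2 * u + A * tanh u = c"
proof -
  assume A: "0 \<le> A"
  define g where "g u = 2 * u + A * tanh u" for u
  have gc: "continuous_on {- \<bar>c\<bar>..\<bar>c\<bar>} g" unfolding g_def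
    by (intro continuous_intros) (auto simp: cosh_nz)
  have "g (- \<bar>c\<bar>) \<le> c"
  proof -
    have "0 \<le> A * tanh \<bar>c\<bar>" using A by simp
    then show ?thesis unfolding g_def by simp
  qed
  moreover have "c \<le> g \<bar>c\<bar>"
  proof -
    have "0 \<le> A * tanh \<bar>c\<bar>" using A by simp
    then show ?thesis unfolding g_def by simp
  qed
  ultimately obtain u where "g u = c" using IVT'[of g "-\<bar>c\<bar>" c "\<bar>c\<bar>", OF _ _ _ gc] by auto
  moreover have "v = u" if "g v = c" for v
    using g_strict[OF A, of u v] g_strict[OF A, of v u] that \<open>g u = c\<close> unfolding g_def
    by (cases u v rule: linorder_cases) auto
  ultimately show ?thesis unfolding g_def by blast
qed

definition Uf :: "real \<Rightarrow> real \<Rightarrow> real" where "Uf A c = (THE u. 2 * u + A * tanh u = c)"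

lemma Uf_eq: "0 \<le> A \<Longrightarrow> 2 * Uf A c + A * tanh (Uf A c) = c"
  unfolding Uf_def by (rule theI'[OF U_ex1])

lemma Uf_unique: "0 \<le> A \<Longrightarrow> 2 * u + A * tanh u = c \<Longrightarrow> u = Uf A c"
  unfolding Uf_def by (rule the1_equality[OF U_ex1, symmetric]) auto

lemma sol_bounds:
  fixes A u c :: real
  assumes A: "0 \<le> A" and eq: "2 * u + A * tanh u = c"
  shows "\<bar>u\<bar> \<le> \<bar>c\<bar> / 2" "\<bar>(tanh u)\<^sup>2 - (c / (2 + A))\<^sup>2\<bar> \<le> \<bar>c\<bar> ^ 4"
proof -
  show u: "\<bar>u\<bar> \<le> \<bar>c\<bar> / 2"
  proof (cases "u \<ge> 0")
    case True
    then have "0 \<le> A * tanh u" using A by simp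
    then show ?thesis using eq True by linarith
  next
    case False
    then have "A * tanh u \<le> 0" using A by (simp add: mult_nonneg_nonpos)
    then show ?thesis using eq False by linarith
  qed
  define t where "t = tanh u"
  have nz: "2 + A \<noteq> 0" using A by linarith
  have "t - c / (2 + A) = ((2 + A) * t - c) / (2 + A)" using nz by (simp add: diff_divide_distrib)
  also have "(2 + A) * t - c = 2 * (t - u)" using eq unfolding t_def by (simp add: algebra_simps)
  finally have d: "t - c / (2 + A) = 2 * (t - u) / (2 + A)" .
  have "\<bar>t - u\<bar> \<le> \<bar>u\<bar> ^ 3" using abs_tanh_cubic[of u] unfolding t_def by (simp add: abs_minus_commute)
  also have "\<dots> \<le> (\<bar>c\<bar> / 2) ^ 3" using u by (intro power_mono) auto
  finally have tu: "\<bar>t - u\<bar> \<le> \<bar>c\<bar> ^ 3 / 8" by (simp add: power_divide)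
  have "\<bar>t - c / (2 + A)\<bar> = 2 * \<bar>t - u\<bar> / (2 + A)" using A unfolding d by (simp only: abs_divide abs_mult)
  also have "\<dots> \<le> 2 * \<bar>t - u\<bar> / 2" using A by (intro divide_left_mono) auto
  also have "\<dots> = \<bar>t - u\<bar>" by simp
  also have "\<dots> \<le> \<bar>c\<bar> ^ 3" using tu abs_ge_zero[of "t - u"] by linarith
  finally have d1: "\<bar>t - c / (2 + A)\<bar> \<le> \<bar>c\<bar> ^ 3" .
  have "\<bar>c / (2 + A)\<bar> = \<bar>c\<bar> / (2 + A)" using A by (simp add: abs_divide)
  also have "\<dots> \<le> \<bar>c\<bar> / 2" using A by (intro divide_left_mono) auto
  finally have "\<bar>c / (2 + A)\<bar> \<le> \<bar>c\<bar> / 2" .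
  moreover have "\<bar>t\<bar> \<le> \<bar>c\<bar> / 2" using abs_tanh_le[of u] u unfolding t_def by linarith
  ultimately have d2: "\<bar>t + c / (2 + A)\<bar> \<le> \<bar>c\<bar>" by linarith
  have "t\<^sup>2 - (c / (2 + A))\<^sup>2 = (t - c / (2 + A)) * (t + c / (2 + A))"
    by (simp add: power2_eq_square algebra_simps)
  then have "\<bar>t\<^sup>2 - (c / (2 + A))\<^sup>2\<bar> = \<bar>t - c / (2 + A)\<bar> * \<bar>t + c / (2 + A)\<bar>"
    by (simp only: abs_mult)
  also have "\<dots> \<le> \<bar>c\<bar> ^ 3 * \<bar>c\<bar>" using d1 d2 by (intro mult_mono) auto
  also have "\<bar>c\<bar> ^ 3 * \<bar>c\<bar> = \<bar>c\<bar> ^ 4" by (rule power_Suc2[of _ 3, symmetric, simplified])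
  finally show "\<bar>(tanh u)\<^sup>2 - (c / (2 + A))\<^sup>2\<bar> \<le> \<bar>c\<bar> ^ 4" unfolding t_def .
qed

lemma eq_imp:
  assumes mu: "0 < mu" and E: "is_equilibrium lam mu th al alh eps x y"
  shows "2 * ((eps * alh - th * (x - y)) / 2) + (lam * th / mu) * tanh ((eps * alh - th * (x - y)) / 2) = eps * alh"
proof -
  define T where "T = tanh ((eps * alh - th * (x - y)) / 2)"
  have "mu * x = lam * (1 + T) / 2" "mu * y = lam * (1 - T) / 2"
    using E unfolding is_equilibrium_def F1_tanh F2_tanh T_def by auto
  then have "mu * (x - y) = lam * T" by (simp add: algebra_simps)
  then have "x - y = lam * T / mu" using mu by (simp add: field_simps)
  then show ?thesis unfolding T_def[symmetric] by (simp add: field_simps)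
qed

lemma eq_exists:
  assumes mu: "0 < mu" and u: "2 * u + (lam * th / mu) * tanh u = eps * alh"
  shows "is_equilibrium lam mu th al alh eps (lam * (1 + tanh u) / (2 * mu)) (lam * (1 - tanh u) / (2 * mu))"
    and "(eps * alh - th * (lam * (1 + tanh u) / (2 * mu) - lam * (1 - tanh u) / (2 * mu))) / 2 = u"
proof -
  have x: "lam * (1 + tanh u) / (2 * mu) - lam * (1 - tanh u) / (2 * mu) = lam * tanh u / mu"
    using mu by (simp add: field_simps)
  show w: "(eps * alh - th * (lam * (1 + tanh u) / (2 * mu) - lam * (1 - tanh u) / (2 * mu))) / 2 = u"
    unfolding x using u mu by (simp add: field_simps)
  show "is_equilibrium lam mu th al alh eps (lam * (1 + tanh u) / (2 * mu)) (lam * (1 - tanh u) / (2 * mu))"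
    unfolding is_equilibrium_def F1_tanh F2_tanh w using mu by simp
qed



theorem mainTheorem2:
  fixes lam mu th al alh :: real
  assumes "lam > 0" and "mu > 0" and "th > 0" and "lam * th > 2 * mu"
  defines "wcr \<equiv> sqrt (lam\<^sup>2 * th\<^sup>2 - 4 * mu\<^sup>2) / 2"
  defines "Dcr \<equiv> arccos (- (2 * mu) / (lam * th)) / wcr"
  shows "\<exists>Dmod :: real \<Rightarrow> real.
     (\<forall>\<^sub>F eps in nhds 0.
        (\<forall>D. 0 < D \<and> D < Dmod eps \<longrightarrow> lin_stable lam mu th al alh eps D) \<and>
        (\<exists>\<delta>>0. \<forall>D. Dmod eps < D \<and> D < Dmod eps + \<delta> \<longrightarrow> lin_unstable lam mu th al alh eps D)) \<and>
     (\<lambda>eps. Dmod eps - Dcr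
        - (4 * mu ^ 3 + mu\<^sup>2 * lam\<^sup>2 * th\<^sup>2 * Dcr) / (4 * wcr\<^sup>2 * (lam * th + 2 * mu)\<^sup>2)
          * eps\<^sup>2 * alh\<^sup>2) \<in> O[at (0::real)](\<lambda>eps. eps ^ 3)"
proof -
  note lam = assms(1) and mu = assms(2) and th = assms(3) and big = assms(4)
  define K0 where "K0 = lam * th / 2"
  define A where "A = lam * th / mu"
  have A0: "0 \<le> A" unfolding A_def using lam th mu by simp
  have K0mu: "mu < K0" unfolding K0_def using big by simp
  have K0pos: "0 < K0" using K0mu mu by simp
  define Kf where "Kf c = K0 * (1 - (tanh (Uf A c))\<^sup>2)" for c
  define Dmod where "Dmod eps = fD mu (Kf (eps * alh))" for eps
  define K1 where "K1 = (mu + K0) / 2"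
  have K1: "mu < K1" "K1 < K0" unfolding K1_def using K0mu by auto
  define \<rho> where "\<rho> = min 1 ((K0 - mu) / (2 * K0))"
  have \<rho>: "0 < \<rho>" "\<rho> \<le> 1" "\<rho> \<le> (K0 - mu) / (2 * K0)"
    unfolding \<rho>_def using K0mu K0pos by auto
  have KB: "K1 \<le> Kf c \<and> Kf c \<le> K0 \<and> (Kf c - K0)\<^sup>2 \<le> K0\<^sup>2 * \<bar>c\<bar> ^ 3 \<and>
            \<bar>(tanh (Uf A c))\<^sup>2 - (c / (2 + A))\<^sup>2\<bar> \<le> \<bar>c\<bar> ^ 3" if c: "\<bar>c\<bar> < \<rho>" for c
  proof -
    define u where "u = Uf A c"
    define t where "t = tanh u"
    have eq: "2 * u + A * tanh u = c" unfolding u_def by (rule Uf_eq[OF A0])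
    note sb = sol_bounds[OF A0 eq]
    have c1: "\<bar>c\<bar> \<le> 1" using c \<rho> by simp
    have ta: "\<bar>t\<bar> \<le> \<bar>c\<bar>" using abs_tanh_le[of u] sb(1) unfolding t_def by simp
    have t2: "t\<^sup>2 \<le> c\<^sup>2" using ta by (metis abs_ge_zero power2_abs power_mono)
    have c2: "c\<^sup>2 \<le> \<bar>c\<bar>" using c1 by (metis abs_ge_zero mult_left_le power2_abs power2_eq_square)
    have c43: "\<bar>c\<bar> ^ 4 \<le> \<bar>c\<bar> ^ 3" using c1 by (intro power_decreasing) auto
    have Kd: "Kf c - K0 = - (K0 * t\<^sup>2)" unfolding Kf_def t_def u_def by (simp add: algebra_simps)
    have "K0 * t\<^sup>2 \<le> K0 * \<bar>c\<bar>" using t2 c2 K0pos by (intro mult_left_mono) auto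
    also have "\<dots> \<le> K0 * \<rho>" using c K0pos by simp
    also have "\<dots> \<le> K0 * ((K0 - mu) / (2 * K0))" using \<rho> K0pos by (intro mult_left_mono) auto
    also have "\<dots> = (K0 - mu) / 2" using K0pos by simp
    finally have "K0 * t\<^sup>2 \<le> (K0 - mu) / 2" .
    then have g1: "K1 \<le> Kf c" using Kd unfolding K1_def by simp
    have "0 \<le> K0 * t\<^sup>2" using K0pos by simp
    then have g2: "Kf c \<le> K0" using Kd by linarith
    have "(Kf c - K0)\<^sup>2 = K0\<^sup>2 * (t\<^sup>2)\<^sup>2" unfolding Kd by (simp add: power_mult_distrib)
    also have "\<dots> \<le> K0\<^sup>2 * (c\<^sup>2)\<^sup>2" using t2 by (intro mult_left_mono power_mono[of "t\<^sup>2" "c\<^sup>2"]) auto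
    also have "(c\<^sup>2)\<^sup>2 = \<bar>c\<bar> ^ 4" by (simp flip: power_mult)
    also have "K0\<^sup>2 * \<bar>c\<bar> ^ 4 \<le> K0\<^sup>2 * \<bar>c\<bar> ^ 3" using c43 by (intro mult_left_mono) auto
    finally have g3: "(Kf c - K0)\<^sup>2 \<le> K0\<^sup>2 * \<bar>c\<bar> ^ 3" .
    have g4: "\<bar>(tanh (Uf A c))\<^sup>2 - (c / (2 + A))\<^sup>2\<bar> \<le> \<bar>c\<bar> ^ 3"
      using sb(2) c43 unfolding u_def by linarith
    show ?thesis using g1 g2 g3 g4 by blast
  qed
  have ev: "\<forall>\<^sub>F eps in nhds 0. \<bar>eps * alh\<bar> < \<rho>"
    unfolding eventually_nhds_metric
  proof (intro exI[of _ "\<rho> / (\<bar>alh\<bar> + 1)"] conjI allI impI)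
    show "0 < \<rho> / (\<bar>alh\<bar> + 1)" using \<rho> by simp
    fix eps :: real assume "dist eps 0 < \<rho> / (\<bar>alh\<bar> + 1)"
    then have e: "\<bar>eps\<bar> * (\<bar>alh\<bar> + 1) < \<rho>" by (simp add: dist_real_def field_simps)
    have "\<bar>eps * alh\<bar> \<le> \<bar>eps\<bar> * (\<bar>alh\<bar> + 1)" by (simp add: abs_mult mult_left_mono)
    then show "\<bar>eps * alh\<bar> < \<rho>" using e by linarith
  qed
  have SP: "(\<forall>D. 0 < D \<and> D < Dmod eps \<longrightarrow> lin_stable lam mu th al alh eps D) \<and>
        (\<exists>\<delta>>0. \<forall>D. Dmod eps < D \<and> D < Dmod eps + \<delta> \<longrightarrow> lin_unstable lam mu th al alh eps D)"
    if ce: "\<bar>eps * alh\<bar> < \<rho>" for eps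
  proof -
    define c where "c = eps * alh"
    define K where "K = Kf c"
    have KK: "mu < K" using KB[of c] ce K1 unfolding c_def K_def by auto
    have DmK: "Dmod eps = arccos (- mu / K) / sqrt (K\<^sup>2 - mu\<^sup>2)"
      unfolding Dmod_def fD_def thf_def Wf_def K_def c_def ..
    have kkK: "2 * kk lam th alh eps x y = K" if "is_equilibrium lam mu th al alh eps x y" for x y
    proof -
      have "(eps * alh - th * (x - y)) / 2 = Uf A c"
        unfolding c_def A_def by (rule Uf_unique) (use eq_imp[OF mu that] lam th mu in auto)
      then show ?thesis unfolding kk_def K_def Kf_def K0_def by simp
    qed
    show ?thesis
    proof
      show "\<forall>D. 0 < D \<and> D < Dmod eps \<longrightarrow> lin_stable lam mu th al alh eps D"
      proof (intro allI impI, unfold lin_stable_def, intro allI impI)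
        fix D x y s
        assume D: "0 < D \<and> D < Dmod eps" and E: "is_equilibrium lam mu th al alh eps x y"
          and cf: "char_fun lam mu th al alh eps x y D s = 0"
        have "(s + complex_of_real mu) * (s + complex_of_real mu + complex_of_real K * exp (- s * complex_of_real D)) = 0"
          using cf unfolding char_fun_factor kkK[OF E] .
        then consider "s + complex_of_real mu = 0" | "s + complex_of_real mu + complex_of_real K * exp (- s * complex_of_real D) = 0"
          by auto
        then show "Re s < 0"
        proof cases
          case 1
          then have "s = - complex_of_real mu" by (simp add: add_eq_0_iff)
          then show ?thesis using mu by simp
        next
          case 2
          show ?thesis by (rule stab[OF mu KK _ _ 2]) (use D DmK in auto)
        qed
      qed
      show "\<exists>\<delta>>0. \<forall>D. Dmod eps < D \<and> D < Dmod eps + \<delta> \<longrightarrow> lin_unstable lam mu th al alh eps D"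
      proof (intro exI[of _ 1] conjI allI impI)
        show "(0::real) < 1" by simp
      next
        fix D assume D: "Dmod eps < D \<and> D < Dmod eps + 1"
        have D0: "0 < D"
        proof -
          have "0 \<le> arccos (- mu / K)" using mu KK by (intro arccos_lbound) (auto simp: field_simps)
          moreover have "mu\<^sup>2 \<le> K\<^sup>2" using mu KK by (intro power_mono) auto
          then have "0 \<le> sqrt (K\<^sup>2 - mu\<^sup>2)" by simp
          ultimately have "0 \<le> Dmod eps" unfolding DmK by simp
          then show ?thesis using D by simp
        qed
        obtain s where s: "Re s > 0" "s + complex_of_real mu + complex_of_real K * exp (- s * complex_of_real D) = 0"
          using unstab[OF mu KK D0] D DmK by auto
        define u where "u = Uf A c"
        have ueq: "2 * u + (lam * th / mu) * tanh u = eps * alh"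
          using Uf_eq[OF A0, of c] unfolding u_def A_def c_def by simp
        note EE = eq_exists[OF mu ueq]
        have "2 * kk lam th alh eps (lam * (1 + tanh u) / (2 * mu)) (lam * (1 - tanh u) / (2 * mu)) = K"
          using kkK[OF EE(1)] .
        then have "char_fun lam mu th al alh eps (lam * (1 + tanh u) / (2 * mu)) (lam * (1 - tanh u) / (2 * mu)) D s = 0"
          unfolding char_fun_factor using s(2) by simp
        then show "lin_unstable lam mu th al alh eps D"
          unfolding lin_unstable_def using EE(1) s(1) by blast
      qed
    qed
  qed
  obtain M2 where M2: "\<forall>K\<in>{K1..K0}. \<bar>fdd mu K\<bar> \<le> M2"
  proof -
    have "compact (fdd mu ` {K1..K0})" by (rule compact_continuous_image[OF fdd_cont[OF mu K1(1)]]) simp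
    then have "bounded (fdd mu ` {K1..K0})" by (rule compact_imp_bounded)
    then obtain a where "\<forall>x\<in>fdd mu ` {K1..K0}. norm x \<le> a" by (auto simp: bounded_iff)
    then show ?thesis using that by auto
  qed
  have M2pos: "0 \<le> M2"
  proof -
    have "\<bar>fdd mu K0\<bar> \<le> M2" using M2 K1 by auto
    then show ?thesis by linarith
  qed
  have TAY: "\<bar>fD mu K - fD mu K0 - fd mu K0 * (K - K0)\<bar> \<le> M2 * (K - K0)\<^sup>2" if "K1 \<le> K" "K \<le> K0" for K
  proof (rule taylor2[where f''="fdd mu"])
    show "K1 \<le> K0" using K1 by simp
    show "DERIV (fD mu) x :> fd mu x" if "K1 \<le> x" "x \<le> K0" for x
      using DfD[OF mu, of x] that K1 by simp
    show "DERIV (fd mu) x :> fdd mu x" if "K1 \<le> x" "x \<le> K0" for x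
      using Dfd[OF mu, of x] that K1 by simp
    show "\<bar>fdd mu x\<bar> \<le> M2" if "K1 \<le> x" "x \<le> K0" for x
      using M2 that by auto
  qed (use that in auto)
  have W0: "0 < Wf mu K0" by (rule Wpos[OF mu K0mu])
  have Wc: "Wf mu K0 = wcr"
  proof -
    have "lam\<^sup>2 * th\<^sup>2 - 4 * mu\<^sup>2 = 2\<^sup>2 * (K0\<^sup>2 - mu\<^sup>2)" unfolding K0_def by (simp add: power_mult_distrib power_divide algebra_simps)
    then have "sqrt (lam\<^sup>2 * th\<^sup>2 - 4 * mu\<^sup>2) = sqrt (2\<^sup>2) * sqrt (K0\<^sup>2 - mu\<^sup>2)"
      by (simp only: real_sqrt_mult)
    then have "sqrt (lam\<^sup>2 * th\<^sup>2 - 4 * mu\<^sup>2) = 2 * sqrt (K0\<^sup>2 - mu\<^sup>2)" by simp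
    then show ?thesis unfolding wcr_def Wf_def by simp
  qed
  have Dc: "fD mu K0 = Dcr"
  proof -
    have "- mu / K0 = - (2 * mu) / (lam * th)" unfolding K0_def by simp
    then show ?thesis unfolding fD_def thf_def Dcr_def Wc by simp
  qed
  have fdK0: "fd mu K0 = (- mu / K0 - Dcr * K0) / wcr\<^sup>2"
  proof -
    have "thf mu K0 = Dcr * wcr" using Dc W0 Wc unfolding fD_def by (simp add: field_simps)
    then show ?thesis unfolding fd_def th1_def W1_def Wc using W0 Wc K0pos by (simp add: field_simps)
  qed
  define Cc where "Cc = (4 * mu ^ 3 + mu\<^sup>2 * lam\<^sup>2 * th\<^sup>2 * Dcr) / (4 * wcr\<^sup>2 * (lam * th + 2 * mu)\<^sup>2)"
  have CcE: "Cc = - fd mu K0 * K0 * (mu / (2 * mu + lam * th))\<^sup>2"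
  proof -
    have w: "wcr \<noteq> 0" using W0 Wc by simp
    have "0 < lam * th" using lam th by simp
    then have P: "2 * mu + lam * th \<noteq> 0" using mu by linarith
    have e1: "- fd mu K0 * K0 = (mu + Dcr * K0\<^sup>2) / wcr\<^sup>2"
      unfolding fdK0 using K0pos w by (simp add: field_simps power2_eq_square)
    have e2: "4 * mu ^ 3 + mu\<^sup>2 * lam\<^sup>2 * th\<^sup>2 * Dcr = 4 * ((mu + Dcr * K0\<^sup>2) * mu\<^sup>2)"
      unfolding K0_def by (simp add: power2_eq_square power3_eq_cube algebra_simps)
    have e3: "lam * th + 2 * mu = 2 * mu + lam * th" by simp
    show ?thesis unfolding Cc_def e1 e2 e3 using w P by (simp add: power_divide)
  qed
  have cE: "(c / (2 + A))\<^sup>2 = (mu / (2 * mu + lam * th))\<^sup>2 * c\<^sup>2" for c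
  proof -
    have "2 + A = (2 * mu + lam * th) / mu" unfolding A_def using mu by (simp add: field_simps)
    then have "c / (2 + A) = mu / (2 * mu + lam * th) * c" by simp
    then show ?thesis by (simp add: power_mult_distrib power_divide)
  qed
  show ?thesis
  proof (intro exI[of _ Dmod] conjI)
    show "\<forall>\<^sub>F eps in nhds 0.
        (\<forall>D. 0 < D \<and> D < Dmod eps \<longrightarrow> lin_stable lam mu th al alh eps D) \<and>
        (\<exists>\<delta>>0. \<forall>D. Dmod eps < D \<and> D < Dmod eps + \<delta> \<longrightarrow> lin_unstable lam mu th al alh eps D)"
      using ev by (rule eventually_mono) (rule SP)
    show "(\<lambda>eps. Dmod eps - Dcr
        - (4 * mu ^ 3 + mu\<^sup>2 * lam\<^sup>2 * th\<^sup>2 * Dcr) / (4 * wcr\<^sup>2 * (lam * th + 2 * mu)\<^sup>2)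
          * eps\<^sup>2 * alh\<^sup>2) \<in> O[at (0::real)](\<lambda>eps. eps ^ 3)"
      unfolding Cc_def[symmetric]
    proof (rule bigoI[where c = "(M2 * K0\<^sup>2 + \<bar>fd mu K0\<bar> * K0) * \<bar>alh\<bar> ^ 3"])
      have "\<forall>\<^sub>F eps in at 0. \<bar>eps * alh\<bar> < \<rho>"
        using ev unfolding eventually_at_filter by (auto elim: eventually_mono)
      then show "\<forall>\<^sub>F eps in at 0. norm (Dmod eps - Dcr - Cc * eps\<^sup>2 * alh\<^sup>2)
                  \<le> (M2 * K0\<^sup>2 + \<bar>fd mu K0\<bar> * K0) * \<bar>alh\<bar> ^ 3 * norm (eps ^ 3)"
      proof (rule eventually_mono)
        fix eps assume ce: "\<bar>eps * alh\<bar> < \<rho>"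
        define c where "c = eps * alh"
        define K where "K = Kf c"
        define t2 where "t2 = (tanh (Uf A c))\<^sup>2"
        have KB': "K1 \<le> K" "K \<le> K0" "(K - K0)\<^sup>2 \<le> K0\<^sup>2 * \<bar>c\<bar> ^ 3" "\<bar>t2 - (c / (2 + A))\<^sup>2\<bar> \<le> \<bar>c\<bar> ^ 3"
          using KB[of c] ce unfolding c_def K_def t2_def by auto
        have KK0: "K - K0 = - K0 * t2" unfolding K_def Kf_def t2_def by (simp add: algebra_simps)
        have c2: "eps\<^sup>2 * alh\<^sup>2 = c\<^sup>2" unfolding c_def by (simp add: power_mult_distrib)
        have split: "Dmod eps - Dcr - Cc * eps\<^sup>2 * alh\<^sup>2 =
           (fD mu K - fD mu K0 - fd mu K0 * (K - K0)) + (- fd mu K0 * K0) * (t2 - (c / (2 + A))\<^sup>2)"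
        proof -
          have "Cc * eps\<^sup>2 * alh\<^sup>2 = (- fd mu K0 * K0) * (c / (2 + A))\<^sup>2"
            unfolding mult.assoc c2 cE CcE by (simp add: algebra_simps)
          moreover have "Dmod eps = fD mu K" unfolding Dmod_def K_def c_def ..
          ultimately show ?thesis unfolding KK0 Dc[symmetric] by (simp add: algebra_simps)
        qed
        have "\<bar>Dmod eps - Dcr - Cc * eps\<^sup>2 * alh\<^sup>2\<bar>
           \<le> \<bar>fD mu K - fD mu K0 - fd mu K0 * (K - K0)\<bar> + \<bar>fd mu K0\<bar> * K0 * \<bar>t2 - (c / (2 + A))\<^sup>2\<bar>"
          unfolding split by (rule order_trans[OF abs_triangle_ineq]) (use K0pos in \<open>simp add: abs_mult\<close>)
        also have "\<dots> \<le> M2 * (K0\<^sup>2 * \<bar>c\<bar> ^ 3) + \<bar>fd mu K0\<bar> * K0 * \<bar>c\<bar> ^ 3"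
        proof (rule add_mono)
          show "\<bar>fD mu K - fD mu K0 - fd mu K0 * (K - K0)\<bar> \<le> M2 * (K0\<^sup>2 * \<bar>c\<bar> ^ 3)"
            using TAY[OF KB'(1,2)] mult_left_mono[OF KB'(3) M2pos] by linarith
          show "\<bar>fd mu K0\<bar> * K0 * \<bar>t2 - (c / (2 + A))\<^sup>2\<bar> \<le> \<bar>fd mu K0\<bar> * K0 * \<bar>c\<bar> ^ 3"
            using KB'(4) K0pos by (intro mult_left_mono) auto
        qed
        also have "\<dots> = (M2 * K0\<^sup>2 + \<bar>fd mu K0\<bar> * K0) * \<bar>alh\<bar> ^ 3 * norm (eps ^ 3)"
          unfolding c_def by (simp add: abs_mult power_mult_distrib power_abs algebra_simps)
        finally show "norm (Dmod eps - Dcr - Cc * eps\<^sup>2 * alh\<^sup>2)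
                  \<le> (M2 * K0\<^sup>2 + \<bar>fd mu K0\<bar> * K0) * \<bar>alh\<bar> ^ 3 * norm (eps ^ 3)" by simp
      qed
    qed
  qed
qed


end
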